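(* Let $\mathcal{P}$ be a finite poset such that $\mathcal{C}(\mathcal{P})$ is simplicial. Then the matrix of $\mathbf{M}_{\mathcal{P}}^{-1}$ (in the standard basis $\{\mathbf{e}_x\}_{x\in\mathcal{P}}$) has entries $[\mathbf{M}_{\mathcal{P}}^{-1}]_{xy}=1$ if $x=y$, $[\mathbf{M}_{\mathcal{P}}^{-1}]_{xy}=-1$ if $y\lessdot x$, and $[\mathbf{M}_{\mathcal{P}}^{-1}]_{xy}=0$ otherwise. In particular, when $\mathcal{P}=[p]=\{1,\dots,p\}$ is a chain with the standard order, $\mathbf{M}_{\mathcal{P}}^{-1}$ is the $p\times p$ lower bidiagonal Toeplitz matrix with $1$ on the diagonal, $-1$ on the first subdiagonal (entries $(i+1,i)$), and $0$ elsewhere.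
   Context: The order cone $\mathcal{C}(\mathcal{P})\subset\mathbb{R}^{\mathcal{P}}$ is the set of functions $\mathbf{f}$ on $\mathcal{P}$ with $f_x\ge0$ for all $x$ and $f_x\le f_y$ whenever $x\preceq y$. A cone in $\mathbb{R}^p$ is simplicial if it is the conical hull of $p$ linearly independent vectors. $y\lessdot x$ means $x$ covers $y$: $y\prec x$ and there is no $z$ with $y\prec z\prec x$. The Möbius transform $\mathbf{M}_{\mathcal{P}}$ is the linear map on $\mathbb{R}^{\mathcal{P}}$ with $\mathbf{M}_{\mathcal{P}}(\mathbf{e}_x)=\sum_{y:\,x\preceq y}\mathbf{e}_y$. *)

theory Defs
  imports "HOL-Analysis.Analysis"
begin

text \<open>A finite poset is modelled as a finite type with an order; functions on P are
  vectors in real^'a, indexed by the elements of P.\<close>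

definition order_cone :: "(real^'a::{finite,order}) set" where
  "order_cone = {f. (\<forall>x. 0 \<le> f $ x) \<and> (\<forall>x y. x \<le> y \<longrightarrow> f $ x \<le> f $ y)}"

definition conical_hull :: "'v::real_vector set \<Rightarrow> 'v set" where
  "conical_hull B = {\<Sum>v\<in>B. c v *\<^sub>R v | c. \<forall>v\<in>B. 0 \<le> c v}"

definition simplicial :: "(real^'a::finite) set \<Rightarrow> bool" where
  "simplicial C \<longleftrightarrow> (\<exists>B. finite B \<and> card B = CARD('a) \<and> independent B \<and> C = conical_hull B)"

definition covered_by :: "'a::order \<Rightarrow> 'a \<Rightarrow> bool" where
  "covered_by y x \<longleftrightarrow> y < x \<and> \<not> (\<exists>z. y < z \<and> z < x)"

definition mobius_transform :: "real^('a::{finite,order}) \<Rightarrow> real^('a::{finite,order})" where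
  "mobius_transform f = (\<Sum>x\<in>UNIV. f $ x *\<^sub>R (\<Sum>y\<in>{y. x \<le> y}. axis y 1))"

end

theory Submission imports Defs begin


lemma mob_entry: "matrix (mobius_transform :: real^('a::{finite,order}) \<Rightarrow> _) $ i $ j = (if j \<le> i then 1 else 0)"
proof -
  have "mobius_transform (axis j 1 :: real^('a::{finite,order})) = (\<Sum>y\<in>{y. j \<le> y}. axis y 1)"
  proof -
    have "mobius_transform (axis j 1 :: real^('a::{finite,order})) = (\<Sum>x\<in>UNIV. if x = j then (\<Sum>y\<in>{y. x \<le> y}. axis y 1) else 0)"
      unfolding mobius_transform_def by (rule sum.cong) (auto simp: axis_def)
    then show ?thesis by simp
  qed
  then show ?thesis
    by (simp add: matrix_def axis_def sum.delta)
qed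

lemma lower_cover_exists:
  fixes z x :: "'a::{finite,order}"
  assumes "z < x"
  shows "\<exists>w. z \<le> w \<and> covered_by w x"
proof -
  have "finite {w. z \<le> w \<and> w < x}" "{w. z \<le> w \<and> w < x} \<noteq> {}" using assms by auto
  from finite_has_maximal[OF this] obtain m where m: "z \<le> m" "m < x"
     "\<forall>b. z \<le> b \<and> b < x \<longrightarrow> m \<le> b \<longrightarrow> m = b" by auto
  have "covered_by m x" unfolding covered_by_def
  proof (intro conjI notI)
    show "m < x" by (rule m(2))
  next
    assume "\<exists>za. m < za \<and> za < x"
    then obtain w where w: "m < w" "w < x" by blast
    then have "z \<le> w" using m(1) by simp
    then have "m = w" using m(3) w by simp
    then show False using w by simp
  qed
  with m show ?thesis by blast
qed

lemma inv_formula: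
  fixes M :: "real^('a::{finite,order})^('a::{finite,order})"
  assumes uniq: "\<And>x y1 y2::'a::{finite,order}. covered_by y1 x \<Longrightarrow> covered_by y2 x \<Longrightarrow> y1 = y2"
  assumes M: "M = matrix mobius_transform"
  shows "matrix_inv M $ x $ y = (if x = y then 1 else if covered_by y x then -1 else 0)"
proof -
  define N :: "real^('a::{finite,order})^('a::{finite,order})" where "N = (\<chi> x y. if x = y then 1 else if covered_by y x then -1 else 0)"
  have Me: "M $ i $ j = (if j \<le> i then 1 else 0)" for i j unfolding M by (rule mob_entry)
  have NM: "N ** M = mat 1"
  proof (intro iffD2[OF vec_eq_iff] allI)
    fix x z :: "'a::{finite,order}"
    have "(N ** M) $ x $ z = (\<Sum>y\<in>UNIV. N $ x $ y * M $ y $ z)" by (simp add: matrix_matrix_mult_def)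
    also have "\<dots> = (\<Sum>y\<in>UNIV. (if x = y then 1 else 0) * M $ y $ z)
        - (\<Sum>y\<in>UNIV. (if covered_by y x then 1 else 0) * M $ y $ z)"
      unfolding N_def sum_subtractf[symmetric]
      by (rule sum.cong) (auto simp: covered_by_def)
    also have "\<dots> = (if z \<le> x then 1 else 0) - (\<Sum>y\<in>{y. covered_by y x}. M $ y $ z)"
    proof -
      have 1: "(\<Sum>y\<in>UNIV. (if x = y then 1 else 0) * M $ y $ z) = M $ x $ z"
      proof -
        have "\<And>y. (if x = y then 1 else 0) * M$y$z = (if x = y then M$y$z else 0)" by simp
        then show ?thesis by (simp only:) simp
      qed
      have 2: "(\<Sum>y\<in>UNIV. (if covered_by y x then 1 else 0) * M $ y $ z) = (\<Sum>y\<in>{y. covered_by y x}. M $ y $ z)"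
      proof -
        have "\<And>y. (if covered_by y x then 1 else 0) * M$y$z = (if covered_by y x then M$y$z else 0)" by simp
        then show ?thesis by (simp only:) (simp add: sum.If_cases)
      qed
      show ?thesis unfolding 1 2 by (simp add: Me)
    qed
    also have "\<dots> = mat 1 $ x $ z"
    proof (cases "\<exists>y0. covered_by y0 x")
      case False
      then have "\<not> z < x" using lower_cover_exists by blast
      then show ?thesis using False by (auto simp: mat_def)
    next
      case True
      then obtain y0 where y0: "covered_by y0 x" by blast
      have S: "{y. covered_by y x} = {y0}"
      proof (intro set_eqI iffI)
        fix y assume "y \<in> {y. covered_by y x}"
        then have "covered_by y x" by simp
        from uniq[OF this y0] show "y \<in> {y0}" by simp
      qed (use y0 in simp)
      have "(z \<le> x \<and> z \<noteq> x) = (z \<le> y0)"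
      proof
        assume "z \<le> x \<and> z \<noteq> x"
        then have "z < x" by auto
        then obtain w where w: "z \<le> w" "covered_by w x" using lower_cover_exists by blast
        then show "z \<le> y0" using uniq[OF w(2) y0] by simp
      next
        assume "z \<le> y0"
        moreover have "y0 < x" using y0 by (simp add: covered_by_def)
        ultimately have "z < x" by (rule le_less_trans)
        then show "z \<le> x \<and> z \<noteq> x" by (simp add: less_le)
      qed
      then show ?thesis unfolding S Me mat_def by auto
    qed
    finally show "(N ** M) $ x $ z = mat 1 $ x $ z" .
  qed
  then have MN: "M ** N = mat 1" using matrix_left_right_inverse by blast
  have "matrix_inv M = N"
  proof -
    have ex: "M ** N = mat 1 \<and> N ** M = mat 1" using NM MN by blast
    have "A' = N" if "M ** A' = mat 1 \<and> A' ** M = mat 1" for A'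
    proof -
      have "A' = A' ** (M ** N)" using MN by simp
      also have "\<dots> = (A' ** M) ** N" by (simp add: matrix_mul_assoc)
      also have "\<dots> = N" using that by simp
      finally show ?thesis .
    qed
    then show ?thesis unfolding matrix_inv_def using someI[of "\<lambda>A'. M ** A' = mat 1 \<and> A' ** M = mat 1", OF ex] by blast
  qed
  then show ?thesis by (simp add: N_def)
qed



definition ind :: "('a::{finite,order}) set \<Rightarrow> real^('a::{finite,order})" where
  "ind U = (\<chi> w. if w \<in> U then 1 else 0)"

definition extreme :: "real^('a::{finite,order}) \<Rightarrow> bool" where
  "extreme v \<longleftrightarrow> (\<forall>a b. a \<in> order_cone \<longrightarrow> b \<in> order_cone \<longrightarrow> a + b = v \<longrightarrow> (\<exists>t. a = t *\<^sub>R v))"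

lemma cone_ind:
  assumes "\<And>u w. u \<in> U \<Longrightarrow> u \<le> w \<Longrightarrow> w \<in> U"
  shows "ind (U::('a::{finite,order}) set) \<in> order_cone"
  using assms unfolding order_cone_def ind_def by auto

lemma ext_step:
  fixes U :: "('a::{finite,order}) set"
  assumes "a \<in> order_cone" "b \<in> order_cone" "a + b = ind U" "w \<in> U" "w' \<in> U" "w \<le> w'"
  shows "a$w = a$w'"
proof -
  have "a$w \<le> a$w'" "b$w \<le> b$w'" using assms unfolding order_cone_def by auto
  moreover have "a$w + b$w = 1" "a$w' + b$w' = 1"
    using assms(3-5) by (auto simp: ind_def vec_eq_iff)
  ultimately show ?thesis by linarith
qed

lemma ext_out:
  fixes U :: "('a::{finite,order}) set"
  assumes "a \<in> order_cone" "b \<in> order_cone" "a + b = ind U" "w \<notin> U"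
  shows "a$w = 0"
proof -
  have "0 \<le> a$w" "0 \<le> b$w" using assms unfolding order_cone_def by auto
  moreover have "a$w + b$w = 0"
    using assms(3,4) by (auto simp: ind_def vec_eq_iff)
  ultimately show ?thesis by linarith
qed

lemma ext_const:
  fixes U :: "('a::{finite,order}) set"
  assumes "a \<in> order_cone" "b \<in> order_cone" "a + b = ind U" "r \<in> U"
     "\<And>w. w \<in> U \<Longrightarrow> a$w = a$r"
  shows "a = (a$r) *\<^sub>R ind U"
  unfolding vec_eq_iff
proof
  fix w
  show "a$w = ((a$r) *\<^sub>R ind U)$w"
  proof (cases "w \<in> U")
    case True then show ?thesis using assms(5) by (simp add: ind_def)
  next
    case False then show ?thesis using ext_out[OF assms(1-3) False] by (simp add: ind_def)
  qed
qed

lemma ext_up: "extreme (ind {w. (z::('a::{finite,order})) \<le> w})"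
  unfolding extreme_def
proof (intro allI impI)
  fix a b :: "real^('a::{finite,order})"
  assume h: "a \<in> order_cone" "b \<in> order_cone" "a + b = ind {w. z \<le> w}"
  have "a = (a$z) *\<^sub>R ind {w. z \<le> w}"
    by (rule ext_const[OF h]) (auto intro: ext_step[OF h, symmetric])
  then show "\<exists>t. a = t *\<^sub>R ind {w. z \<le> w}" by blast
qed

lemma ext_two:
  fixes y1 y2 x :: "('a::{finite,order})"
  assumes "y1 \<le> x" "y2 \<le> x"
  shows "extreme (ind ({w. y1 \<le> w} \<union> {w. y2 \<le> w}))"
  unfolding extreme_def
proof (intro allI impI)
  fix a b :: "real^('a::{finite,order})"
  let ?U = "{w. y1 \<le> w} \<union> {w. y2 \<le> w}"
  assume h: "a \<in> order_cone" "b \<in> order_cone" "a + b = ind ?U"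
  have e: "a$y1 = a$y2"
    using ext_step[OF h, of y1 x] ext_step[OF h, of y2 x] assms by auto
  have "a = (a$y1) *\<^sub>R ind ?U"
  proof (rule ext_const[OF h])
    fix w assume "w \<in> ?U"
    then show "a$w = a$y1"
      using ext_step[OF h, of y1 w] ext_step[OF h, of y2 w] e by auto
  qed simp
  then show "\<exists>t. a = t *\<^sub>R ind ?U" by blast
qed



lemma simplicial_ray:
  fixes B :: "(real^('a::{finite,order})) set" and v :: "real^('a::{finite,order})"
  assumes fin: "finite B" and indep: "independent B" and C: "order_cone = conical_hull B"
  and v: "v \<in> order_cone" "v \<noteq> 0" "extreme v"
  shows "\<exists>b\<in>B. \<exists>s. s \<noteq> 0 \<and> b = s *\<^sub>R v"
proof -
  obtain c where c: "v = (\<Sum>b\<in>B. c b *\<^sub>R b)" "\<forall>b\<in>B. 0 \<le> c b"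
    using v(1) unfolding C conical_hull_def by blast
  obtain b0 where b0: "b0 \<in> B" "c b0 \<noteq> 0"
  proof (rule ccontr)
    assume "\<not> thesis"
    then have "\<forall>b\<in>B. c b = 0" using that by blast
    then have "v = 0" unfolding c(1) by simp
    with v(2) show False by simp
  qed
  define a where "a = (\<Sum>b\<in>B. (if b = b0 then c b0 else 0) *\<^sub>R b)"
  define r where "r = (\<Sum>b\<in>B. (if b = b0 then 0 else c b) *\<^sub>R b)"
  have a_in: "a \<in> order_cone" unfolding C conical_hull_def a_def
    using c(2) b0 by (intro CollectI exI[of _ "\<lambda>b. if b = b0 then c b0 else 0"]) auto
  have r_in: "r \<in> order_cone" unfolding C conical_hull_def r_def
    using c(2) by (intro CollectI exI[of _ "\<lambda>b. if b = b0 then 0 else c b"]) auto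
  have "a + r = (\<Sum>b\<in>B. (if b = b0 then c b0 else 0) *\<^sub>R b + (if b = b0 then 0 else c b) *\<^sub>R b)"
    unfolding a_def r_def by (simp add: sum.distrib)
  also have "\<dots> = v" unfolding c(1) by (rule sum.cong) auto
  finally have ar: "a + r = v" .
  then obtain t where t: "a = t *\<^sub>R v" using v(3) a_in r_in unfolding extreme_def by blast
  have a0: "a = c b0 *\<^sub>R b0" unfolding a_def using fin b0(1)
    by (simp add: if_distrib[of "\<lambda>x. x *\<^sub>R _"] sum.delta cong: if_cong)
  have "b0 \<noteq> 0" using indep b0(1) dependent_zero by blast
  then have "a \<noteq> 0" using a0 b0(2) by simp
  then have "t \<noteq> 0" using t by auto
  have "b0 = inverse (c b0) *\<^sub>R (c b0 *\<^sub>R b0)" using b0(2) by simp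
  also have "\<dots> = inverse (c b0) *\<^sub>R (t *\<^sub>R v)" using a0 t by simp
  also have "\<dots> = (t / c b0) *\<^sub>R v" by (simp add: divide_inverse mult.commute)
  finally have "b0 = (t / c b0) *\<^sub>R v" .
  then show ?thesis using b0 \<open>t \<noteq> 0\<close> by (intro bexI[of _ b0] exI[of _ "t / c b0"]) auto
qed



lemma ind_inj: "ind (U::('a::{finite,order}) set) = ind V \<Longrightarrow> U = V"
  unfolding ind_def vec_eq_iff by (auto split: if_splits)

lemma ind_nz: "w \<in> U \<Longrightarrow> ind (U::('a::{finite,order}) set) \<noteq> 0"
  unfolding ind_def vec_eq_iff by (intro notI) (drule spec[of _ w], simp)

lemma scale_ind_inj:
  fixes U V :: "('a::{finite,order}) set"
  assumes "s \<noteq> 0" "s' \<noteq> 0" "s *\<^sub>R ind U = s' *\<^sub>R ind V" "w \<in> U"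
  shows "U = V"
proof -
  have e: "s * (if u \<in> U then 1 else 0) = s' * (if u \<in> V then 1 else 0)" for u
    using assms(3) unfolding ind_def vec_eq_iff by (drule_tac x=u in spec) simp
  have "w \<in> V" using e[of w] assms by (auto split: if_splits)
  then have "s = s'" using e[of w] assms by simp
  then have "ind U = ind V" using assms(1,3) by simp
  then show ?thesis by (rule ind_inj)
qed

lemma simplicial_uniq:
  fixes x y1 y2 :: "'a::{finite,order}"
  assumes S: "simplicial (order_cone :: (real^('a::{finite,order})) set)"
    and c1: "covered_by y1 x" and c2: "covered_by y2 x"
  shows "y1 = y2"
proof (rule ccontr)
  assume ne: "y1 \<noteq> y2"
  obtain B :: "(real^('a::{finite,order})) set" where B: "finite B" "card B = CARD('a)" "independent B"
     "order_cone = conical_hull B"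
    using S unfolding simplicial_def by blast
  define U2 where "U2 = {w. y1 \<le> w} \<union> {w. y2 \<le> w}"
  define f where "f = (\<lambda>z::'a. ind {w. z \<le> w})"
  define SS where "SS = range f \<union> {ind U2}"
  have lt1: "y1 < x" and lt2: "y2 < x" using c1 c2 by (auto simp: covered_by_def)
  have injf: "inj f"
  proof (rule injI)
    fix z z' assume "f z = f z'"
    then have "{w. z \<le> w} = {w. z' \<le> w}" unfolding f_def by (rule ind_inj)
    then show "z = z'" by (metis (mono_tags) mem_Collect_eq order_refl order.antisym)
  qed
  have notin: "ind U2 \<notin> range f"
  proof
    assume "ind U2 \<in> range f"
    then obtain z where "ind U2 = ind {w. z \<le> w}" unfolding f_def by blast
    then have U: "U2 = {w. z \<le> w}" by (rule ind_inj)
    have zy1: "z \<le> y1" "z \<le> y2" using U unfolding U2_def by auto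
    have "z \<in> U2" using U by simp
    then have "y1 \<le> z \<or> y2 \<le> z" unfolding U2_def by auto
    then show False
    proof
      assume "y1 \<le> z"
      then have "y1 < y2" using zy1 ne by (simp add: order.antisym less_le)
      then show False using c1 lt2 unfolding covered_by_def by blast
    next
      assume "y2 \<le> z"
      then have "y2 < y1" using zy1 ne by (simp add: order.antisym less_le)
      then show False using c2 lt1 unfolding covered_by_def by blast
    qed
  qed
  have cardS: "card SS = CARD('a) + 1"
    unfolding SS_def using notin card_image[OF injf] by simp
  have props: "\<exists>U w. v = ind U \<and> w \<in> U \<and> v \<in> order_cone \<and> extreme v" if vS: "v \<in> SS" for v
  proof (cases "v = ind U2")
    case True
    then show ?thesis using ext_two[OF less_imp_le[OF lt1] less_imp_le[OF lt2]]
      by (intro exI[of _ U2] exI[of _ y1]) (auto simp: U2_def intro!: cone_ind elim: order_trans)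
  next
    case False
    then obtain z where "v = f z" using vS unfolding SS_def by auto
    then show ?thesis using ext_up[of z] unfolding f_def
      by (intro exI[of _ "{w. z \<le> w}"] exI[of _ z]) (auto intro!: cone_ind elim: order_trans)
  qed
  have "\<forall>v\<in>SS. \<exists>b\<in>B. \<exists>s. s \<noteq> 0 \<and> b = s *\<^sub>R v"
  proof
    fix v assume "v \<in> SS"
    then obtain U w where "v = ind U" "w \<in> U" "v \<in> order_cone" "extreme v" using props by blast
    then show "\<exists>b\<in>B. \<exists>s. s \<noteq> 0 \<and> b = s *\<^sub>R v"
      using simplicial_ray[OF B(1,3,4)] ind_nz by blast
  qed
  then obtain g where g: "\<forall>v\<in>SS. g v \<in> B \<and> (\<exists>s. s \<noteq> 0 \<and> g v = s *\<^sub>R v)"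
    by metis
  have "inj_on g SS"
  proof (rule inj_onI)
    fix v v' assume vv: "v \<in> SS" "v' \<in> SS" "g v = g v'"
    obtain U w where U: "v = ind U" "w \<in> U" using props vv(1) by blast
    obtain U' w' where U': "v' = ind U'" using props vv(2) by blast
    obtain s where s: "s \<noteq> 0" "g v = s *\<^sub>R v" using g vv(1) by blast
    obtain s' where s': "s' \<noteq> 0" "g v' = s' *\<^sub>R v'" using g vv(2) by blast
    have "U = U'" using scale_ind_inj[OF s(1) s'(1) _ U(2)] s s' vv(3) U U' by simp
    then show "v = v'" using U U' by simp
  qed
  then have "card SS \<le> card B"
    using g by (intro card_inj_on_le[OF _ _ B(1)]) auto
  then show False using cardS B(2) by simp
qed


lemma lin_uniq:
  fixes x y1 y2 :: "'b::{finite,linorder}"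
  assumes "covered_by y1 x" "covered_by y2 x"
  shows "y1 = y2"
proof (rule ccontr)
  assume "y1 \<noteq> y2"
  then have "y1 < y2 \<or> y2 < y1" by auto
  then show False using assms unfolding covered_by_def by blast
qed

theorem lemma5:
  "(simplicial (order_cone :: (real^('a::{finite,order})) set) \<longrightarrow>
     (\<forall>x y::'a::{finite,order}.
        matrix_inv (matrix mobius_transform :: real^('a::{finite,order})^('a::{finite,order})) $ x $ y =
        (if x = y then 1 else if covered_by y x then -1 else 0)))
   \<and>
   (\<forall>i j::'b::{finite,linorder}.
        matrix_inv (matrix mobius_transform :: real^('b::{finite,linorder})^('b::{finite,linorder})) $ i $ j =
        (if i = j then 1 else if covered_by j i then -1 else 0))"
proof (intro conjI impI allI)
  fix x y :: "'a::{finite,order}"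
  assume S: "simplicial (order_cone :: (real^('a::{finite,order})) set)"
  show "matrix_inv (matrix mobius_transform :: real^('a::{finite,order})^('a::{finite,order})) $ x $ y =
        (if x = y then 1 else if covered_by y x then -1 else 0)"
    by (rule inv_formula[OF simplicial_uniq[OF S] refl])
next
  fix i j :: "'b::{finite,linorder}"
  show "matrix_inv (matrix mobius_transform :: real^('b::{finite,linorder})^('b::{finite,linorder})) $ i $ j =
        (if i = j then 1 else if covered_by j i then -1 else 0)"
    by (rule inv_formula[OF lin_uniq refl])
qed

end
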